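(* For any $n\ge 1$ and any $u\in\mathsf{Tr}(n)$, $\mathrm{in}(u)+\mathrm{out}(u)=n$, where $\mathrm{in}(u)$ (resp. $\mathrm{out}(u)$) is the number of elements of $\mathsf{Tr}(n)$ covered by (resp. covering) $u$.
   Context: A triword of size $n$ is a word $u=u_1\cdots u_n$ with $u_i\in\{0,1,2\}$, $u_1\ne 2$, and such that $u_i=0$ implies $u_j\neq 1$ for all $j>i$; $\mathsf{Tr}(n)$ is their set, ordered componentwise ($u\preccurlyeq v$ iff $u_i\le v_i$ for all $i$). *)

theory Defs
  imports Main
begin

text \<open>Triwords of size n, as lists of naturals (positions 0..n-1 correspond to u_1..u_n).\<close>
definition triword :: "nat \<Rightarrow> nat list \<Rightarrow> bool" where
  "triword n u \<longleftrightarrow> length u = n \<and> (\<forall>i<n. u ! i \<in> {0,1,2}) \<and>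
     (n \<ge> 1 \<longrightarrow> u ! 0 \<noteq> 2) \<and>
     (\<forall>i<n. \<forall>j<n. i < j \<and> u ! i = 0 \<longrightarrow> u ! j \<noteq> 1)"

definition Tr :: "nat \<Rightarrow> nat list set" where
  "Tr n = {u. triword n u}"

definition tw_le :: "nat list \<Rightarrow> nat list \<Rightarrow> bool" where
  "tw_le u v \<longleftrightarrow> length u = length v \<and> (\<forall>i<length u. u ! i \<le> v ! i)"

definition tw_covers :: "nat \<Rightarrow> nat list \<Rightarrow> nat list \<Rightarrow> bool" where
  "tw_covers n u v \<longleftrightarrow> u \<in> Tr n \<and> v \<in> Tr n \<and> tw_le u v \<and> u \<noteq> v \<and>
     \<not> (\<exists>w\<in>Tr n. tw_le u w \<and> tw_le w v \<and> w \<noteq> u \<and> w \<noteq> v)"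

definition tw_in :: "nat \<Rightarrow> nat list \<Rightarrow> nat" where
  "tw_in n u = card {v \<in> Tr n. tw_covers n v u}"

definition tw_out :: "nat \<Rightarrow> nat list \<Rightarrow> nat" where
  "tw_out n u = card {v \<in> Tr n. tw_covers n u v}"

end

theory Submission
  imports Defs
begin

lemma Tr_iff: "u \<in> Tr n \<longleftrightarrow> length u = n \<and> (\<forall>i<n. u!i \<le> 2) \<and> (0<n \<longrightarrow> u!0 \<noteq> 2)
   \<and> (\<forall>i j. i<j \<and> j<n \<and> u!i=0 \<longrightarrow> u!j \<noteq> 1)"
  unfolding Tr_def triword_def
  apply (auto simp: Suc_le_eq)
  using less_trans by blast

lemma upd_Tr:
  assumes "u \<in> Tr n" "k < n"
  shows "u[k:=c] \<in> Tr n \<longleftrightarrow> c \<le> 2 \<and> (k=0 \<longrightarrow> c \<noteq> 2) \<and> (c=0 \<longrightarrow> (\<forall>j. k<j \<and> j<n \<longrightarrow> u!j \<noteq> 1))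
     \<and> (c=1 \<longrightarrow> (\<forall>a<k. u!a \<noteq> 0))"
proof -
  have u: "length u = n" "\<forall>i<n. u!i \<le> 2" "0<n \<longrightarrow> u!0 \<noteq> 2"
    "\<forall>i j. i<j \<and> j<n \<and> u!i=0 \<longrightarrow> u!j \<noteq> 1" using assms(1) unfolding Tr_iff by auto
  show ?thesis
  proof
    assume "u[k:=c] \<in> Tr n"
    then have w: "\<forall>i<n. u[k:=c]!i \<le> 2" "0<n \<longrightarrow> u[k:=c]!0 \<noteq> 2"
      "\<forall>i j. i<j \<and> j<n \<and> u[k:=c]!i=0 \<longrightarrow> u[k:=c]!j \<noteq> 1" unfolding Tr_iff by auto
    have "c \<le> 2" using w(1) assms(2) u(1) by (metis nth_list_update_eq)
    moreover have "k=0 \<longrightarrow> c \<noteq> 2" using w(2) assms(2) u(1) by (metis nth_list_update_eq)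
    moreover have "c=0 \<longrightarrow> (\<forall>j. k<j \<and> j<n \<longrightarrow> u!j \<noteq> 1)"
    proof (intro impI allI)
      fix j assume "c=0" "k<j \<and> j<n"
      then show "u!j \<noteq> 1" using w(3)[rule_format, of k j] u(1) by auto
    qed
    moreover have "c=1 \<longrightarrow> (\<forall>a<k. u!a \<noteq> 0)"
    proof (intro impI allI)
      fix a assume "c=1" "a<k"
      then show "u!a \<noteq> 0" using w(3)[rule_format, of a k] u(1) assms(2) by auto
    qed
    ultimately show "c \<le> 2 \<and> (k=0 \<longrightarrow> c \<noteq> 2) \<and> (c=0 \<longrightarrow> (\<forall>j. k<j \<and> j<n \<longrightarrow> u!j \<noteq> 1))
     \<and> (c=1 \<longrightarrow> (\<forall>a<k. u!a \<noteq> 0))" by blast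
  next
    assume c: "c \<le> 2 \<and> (k=0 \<longrightarrow> c \<noteq> 2) \<and> (c=0 \<longrightarrow> (\<forall>j. k<j \<and> j<n \<longrightarrow> u!j \<noteq> 1))
     \<and> (c=1 \<longrightarrow> (\<forall>a<k. u!a \<noteq> 0))"
    show "u[k:=c] \<in> Tr n"
      unfolding Tr_iff
    proof (intro conjI allI impI)
      show "length (u[k:=c]) = n" using u by simp
    next
      fix i assume "i<n" then show "u[k:=c]!i \<le> 2" using u c by (cases "i=k") auto
    next
      assume "0<n" then show "u[k:=c]!0 \<noteq> 2" using u c by (cases "k=0") auto
    next
      fix i j assume h: "i<j \<and> j<n \<and> u[k:=c]!i=0"
      show "u[k:=c]!j \<noteq> 1"
        using h u c assms(2) by (cases "i=k"; cases "j=k") auto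
    qed
  qed
qed


lemma single:
  assumes uT: "u \<in> Tr n" and vT: "v \<in> Tr n" and le: "tw_le u v" and ne: "u \<noteq> v"
    and nomid: "\<not> (\<exists>w\<in>Tr n. tw_le u w \<and> tw_le w v \<and> w \<noteq> u \<and> w \<noteq> v)"
  shows "\<exists>k<n. v = u[k := v!k]"
proof -
  have lu: "length u = n" and lv: "length v = n" using uT vT unfolding Tr_iff by auto
  have "\<exists>i. i<n \<and> u!i \<noteq> v!i" using ne lu lv nth_equalityI by metis
  define i where "i = (LEAST i. i<n \<and> u!i \<noteq> v!i)"
  have i: "i<n" "u!i \<noteq> v!i" using LeastI_ex[OF \<open>\<exists>i. i<n \<and> u!i \<noteq> v!i\<close>] unfolding i_def by auto
  have before: "u!a = v!a" if "a<i" for a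
    using not_less_Least[of a "\<lambda>i. i<n \<and> u!i \<noteq> v!i"] that i(1) unfolding i_def[symmetric] by auto
  have ple: "u!j \<le> v!j" if "j<n" for j using le that lu unfolding tw_le_def by auto
  have lt: "u!i < v!i" using ple[OF i(1)] i(2) by simp
  have vi: "\<forall>i<n. v!i \<le> 2" "0<n \<longrightarrow> v!0 \<noteq> 2" "\<forall>i j. i<j \<and> j<n \<and> v!i=0 \<longrightarrow> v!j \<noteq> 1"
    using vT unfolding Tr_iff by auto
  have wT: "u[i:=v!i] \<in> Tr n"
    unfolding upd_Tr[OF uT i(1)]
  proof (intro conjI impI allI)
    show "v!i \<le> 2" using vi i by auto
  next
    assume "i=0" then show "v!i \<noteq> 2" using vi i by auto
  next
    fix j assume "v!i = 0" "i<j \<and> j<n" then show "u!j \<noteq> 1" using lt by simp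
  next
    fix a assume "v!i = 1" "a<i"
    then show "u!a \<noteq> 0" using before[of a] vi(3) i(1) by fastforce
  qed
  show ?thesis
  proof (rule ccontr)
    assume "\<not> ?thesis"
    then have nv: "u[i:=v!i] \<noteq> v" using i(1) by auto
    have "u[i:=v!i] \<noteq> u" using i lu by (metis nth_list_update_eq)
    moreover have "tw_le u (u[i:=v!i])" unfolding tw_le_def using lu lt i(1)
      by (auto simp: nth_list_update split: if_split)
    moreover have "tw_le (u[i:=v!i]) v" unfolding tw_le_def using lu lv ple i(1)
      by (auto simp: nth_list_update)
    ultimately show False using nomid wT nv by blast
  qed
qed


lemma mid:
  assumes "tw_le a w" "tw_le w b" "k < length a" "b = a[k:=b!k]"
  shows "w = a[k:=w!k] \<and> a!k \<le> w!k \<and> w!k \<le> b!k"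
proof -
  have l: "length w = length a" "length b = length a" using assms unfolding tw_le_def by auto
  have p1: "a!j \<le> w!j" "w!j \<le> b!j" if "j < length a" for j
    using assms(1,2) l that unfolding tw_le_def by auto
  have "w = a[k:=w!k]"
  proof (rule nth_equalityI)
    show "length w = length (a[k:=w!k])" using l by simp
  next
    fix j assume j: "j < length w"
    show "w!j = a[k:=w!k]!j"
    proof (cases "j=k")
      case True then show ?thesis using j l by simp
    next
      case False
      have "b!j = a!j" using assms(4) False by (metis nth_list_update_neq)
      then show ?thesis using p1[of j] j l False by simp
    qed
  qed
  then show ?thesis using p1[of k] assms(3) by simp
qed

lemma cov_single:
  assumes aT: "a \<in> Tr n" and bT: "b \<in> Tr n" and k: "k < n" and b: "b = a[k:=b!k]"
  shows "tw_covers n a b \<longleftrightarrow> a!k < b!k \<and> \<not>(a!k=0 \<and> b!k=2 \<and> a[k:=1]\<in>Tr n)"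
proof -
  have la: "length a = n" and lb: "length b = n" using aT bT unfolding Tr_iff by auto
  define c where "c = b!k"
  have bc: "b = a[k:=c]" using b unfolding c_def .
  have bk: "b!k = c" unfolding c_def ..
  have b2: "c \<le> 2" using bT k bk unfolding Tr_iff by auto
  have le_iff: "tw_le a b \<longleftrightarrow> a!k \<le> c"
    unfolding tw_le_def bc using la k by (auto simp: nth_list_update)
  have ne_iff: "a \<noteq> b \<longleftrightarrow> a!k \<noteq> c" unfolding bc using k la
    by (metis list_update_id nth_list_update_eq)
  show ?thesis
  proof
    assume cv: "tw_covers n a b"
    then have "a!k < c" unfolding tw_covers_def using le_iff ne_iff by auto
    moreover have "\<not>(a!k=0 \<and> c=2 \<and> a[k:=1]\<in>Tr n)"
    proof
      assume h: "a!k=0 \<and> c=2 \<and> a[k:=1]\<in>Tr n"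
      have "tw_le a (a[k:=1])" unfolding tw_le_def using h la k by (auto simp: nth_list_update)
      moreover have "tw_le (a[k:=1]) b" unfolding tw_le_def bc using h la k by (auto simp: nth_list_update)
      moreover have "a[k:=1] \<noteq> a" using h k la
        by (metis nth_list_update_eq zero_neq_one)
      moreover have "a[k:=1] \<noteq> b" unfolding bc
      proof
        assume "a[k:=1] = a[k:=c]"
        then have "a[k:=1]!k = a[k:=c]!k" by simp
        then show False using h k la by simp
      qed
      ultimately show False using cv h unfolding tw_covers_def by blast
    qed
    ultimately show "a!k < b!k \<and> \<not>(a!k=0 \<and> b!k=2 \<and> a[k:=1]\<in>Tr n)" using bk by simp
  next
    assume h0: "a!k < b!k \<and> \<not>(a!k=0 \<and> b!k=2 \<and> a[k:=1]\<in>Tr n)"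
    then have h: "a!k < c \<and> \<not>(a!k=0 \<and> c=2 \<and> a[k:=1]\<in>Tr n)" using bk by simp
    have "\<not> (\<exists>w\<in>Tr n. tw_le a w \<and> tw_le w b \<and> w \<noteq> a \<and> w \<noteq> b)"
    proof
      assume "\<exists>w\<in>Tr n. tw_le a w \<and> tw_le w b \<and> w \<noteq> a \<and> w \<noteq> b"
      then obtain w where w: "w \<in> Tr n" "tw_le a w" "tw_le w b" "w \<noteq> a" "w \<noteq> b" by blast
      have m: "w = a[k:=w!k]" "a!k \<le> w!k" "w!k \<le> c" using mid[OF w(2,3) _ b] k la bk by auto
      have "w!k \<noteq> a!k" using m(1) w(4) by (metis list_update_id)
      moreover have "w!k \<noteq> c" using m(1) w(5) bc by metis
      ultimately have "a!k = 0" "w!k = 1" "c = 2" using m b2 by auto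
      then show False using h w(1) m(1) by auto
    qed
    then show "tw_covers n a b" unfolding tw_covers_def using aT bT h le_iff ne_iff by auto
  qed
qed


lemma up:
  assumes "u \<in> Tr n" "k < n" "u[k:=c] \<in> Tr n" "u!k < c" "\<not>(u!k=0 \<and> c=2 \<and> u[k:=1]\<in>Tr n)"
  shows "tw_covers n u (u[k:=c])"
proof -
  have l: "length u = n" using assms(1) unfolding Tr_iff by auto
  show ?thesis using cov_single[OF assms(1,3,2)] assms l by simp
qed

lemma down:
  assumes "u \<in> Tr n" "k < n" "u[k:=c] \<in> Tr n" "c < u!k" "\<not>(c=0 \<and> u!k=2 \<and> u[k:=1]\<in>Tr n)"
  shows "tw_covers n (u[k:=c]) u"
proof -
  have l: "length u = n" using assms(1) unfolding Tr_iff by auto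
  have e: "u = (u[k:=c])[k:=u!k]" by simp
  show ?thesis using cov_single[OF assms(3,1,2) e] assms l by simp
qed

lemma up':
  assumes "u \<in> Tr n" "k < n" "tw_covers n u (u[k:=c])"
  shows "u!k < c \<and> \<not>(u!k=0 \<and> c=2 \<and> u[k:=1]\<in>Tr n) \<and> u[k:=c] \<in> Tr n"
proof -
  have l: "length u = n" using assms(1) unfolding Tr_iff by auto
  have T: "u[k:=c] \<in> Tr n" using assms(3) unfolding tw_covers_def by auto
  show ?thesis using cov_single[OF assms(1) T assms(2)] assms l T by simp
qed

lemma down':
  assumes "u \<in> Tr n" "k < n" "tw_covers n (u[k:=c]) u"
  shows "c < u!k \<and> \<not>(c=0 \<and> u!k=2 \<and> u[k:=1]\<in>Tr n) \<and> u[k:=c] \<in> Tr n"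
proof -
  have l: "length u = n" using assms(1) unfolding Tr_iff by auto
  have T: "u[k:=c] \<in> Tr n" using assms(3) unfolding tw_covers_def by auto
  have e: "u = (u[k:=c])[k:=u!k]" by simp
  show ?thesis using cov_single[OF T assms(1,2) e] assms l T by simp
qed

definition Lst :: "nat list \<Rightarrow> nat \<Rightarrow> nat" where
  "Lst u n = Max {j. j<n \<and> u!j = 1}"

definition Zb :: "nat list \<Rightarrow> nat \<Rightarrow> bool" where
  "Zb u i \<longleftrightarrow> (\<exists>a<i. u!a = 0)"

definition pos :: "nat list \<Rightarrow> nat \<Rightarrow> nat \<Rightarrow> nat" where
  "pos u n i = (if i=0 \<and> u!0=1 then Lst u n else i)"

definition cv :: "nat list \<Rightarrow> nat \<Rightarrow> nat" where
  "cv u i = (if u!i=2 then (if Zb u i then 0 else 1) else if u!i=0 then (if Zb u i then 2 else 1)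
     else if i=0 then 0 else 2)"

definition nb :: "nat list \<Rightarrow> nat \<Rightarrow> nat \<Rightarrow> nat list" where
  "nb u n i = u[pos u n i := cv u i]"

lemma Lst_props:
  assumes "0 < n" "u!0 = 1"
  shows "Lst u n < n" "u!(Lst u n) = 1" "\<And>j. j<n \<Longrightarrow> u!j = 1 \<Longrightarrow> j \<le> Lst u n"
proof -
  have f: "finite {j. j<n \<and> u!j = 1}" by simp
  have ne: "{j. j<n \<and> u!j = 1} \<noteq> {}" using assms by auto
  have "Lst u n \<in> {j. j<n \<and> u!j = 1}" unfolding Lst_def using Max_in[OF f ne] .
  then show "Lst u n < n" "u!(Lst u n) = 1" by auto
  show "\<And>j. j<n \<Longrightarrow> u!j = 1 \<Longrightarrow> j \<le> Lst u n" unfolding Lst_def using f by auto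
qed


lemma nb_cov:
  assumes uT: "u \<in> Tr n" and i: "i < n"
  shows "nb u n i \<in> Tr n \<and> (tw_covers n u (nb u n i) \<or> tw_covers n (nb u n i) u)"
proof -
  have u: "length u = n" "\<forall>i<n. u!i \<le> 2" "0<n \<longrightarrow> u!0 \<noteq> 2"
    "\<forall>i j. i<j \<and> j<n \<and> u!i=0 \<longrightarrow> u!j \<noteq> 1" using uT unfolding Tr_iff by auto
  have ui: "u!i \<le> 2" using u i by auto
  show ?thesis
  proof (cases "i=0 \<and> u!0=1")
    case True
    have n0: "0<n" using i by simp
    have u01: "u!0 = 1" using True by simp
    have L1: "Lst u n < n" and L2: "u!(Lst u n) = 1" using Lst_props(1,2)[OF n0 u01] by auto
    have L3: "u!j \<noteq> 1" if "Lst u n < j" "j < n" for j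
      using Lst_props(3)[OF n0 u01, of j] that by auto
    have e: "nb u n i = u[Lst u n := 0]" unfolding nb_def pos_def cv_def using True by simp
    have T: "u[Lst u n := 0] \<in> Tr n"
      unfolding upd_Tr[OF uT L1] using L3 by auto
    have "tw_covers n (u[Lst u n := 0]) u"
      by (rule down[OF uT L1 T]) (simp_all add: L2)
    then show ?thesis using e T by simp
  next
    case False
    then have e: "nb u n i = u[i := cv u i]" unfolding nb_def pos_def by auto
    have ok: "u[i := cv u i] \<in> Tr n \<and> (tw_covers n u (u[i := cv u i]) \<or> tw_covers n (u[i := cv u i]) u)"
    proof (cases "u!i = 2")
      case u2: True
      show ?thesis
      proof (cases "Zb u i")
        case True
        then obtain a where a: "a<i" "u!a=0" unfolding Zb_def by auto
        have c: "cv u i = 0" using u2 True unfolding cv_def by simp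
        have T: "u[i:=0] \<in> Tr n" unfolding upd_Tr[OF uT i]
        proof (intro conjI impI allI)
          fix j assume "i < j \<and> j < n"
          then have "a < j \<and> j < n \<and> u!a = 0" using a by simp
          then show "u!j \<noteq> 1" using u(4) by blast
        qed (use a in auto)
        have T1: "u[i:=1] \<notin> Tr n" unfolding upd_Tr[OF uT i] using a by auto
        show ?thesis using down[OF uT i T] u2 T1 T c by simp
      next
        case False
        have c: "cv u i = 1" using u2 False unfolding cv_def by simp
        have T: "u[i:=1] \<in> Tr n" unfolding upd_Tr[OF uT i] using False unfolding Zb_def by auto
        show ?thesis using down[OF uT i T] u2 T c by simp
      qed
    next
      case n2: False
      show ?thesis
      proof (cases "u!i = 0")
        case u0: True
        show ?thesis
        proof (cases "Zb u i")
          case True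
          then obtain a where a: "a<i" "u!a=0" unfolding Zb_def by auto
          have c: "cv u i = 2" using u0 True unfolding cv_def by simp
          have T: "u[i:=2] \<in> Tr n" unfolding upd_Tr[OF uT i] using a by auto
          have T1: "u[i:=1] \<notin> Tr n" unfolding upd_Tr[OF uT i] using a by auto
          show ?thesis using up[OF uT i T] u0 T1 T c by simp
        next
          case False
          have c: "cv u i = 1" using u0 False unfolding cv_def by simp
          have T: "u[i:=1] \<in> Tr n" unfolding upd_Tr[OF uT i] using False unfolding Zb_def by auto
          show ?thesis using up[OF uT i T] u0 T c by simp
        qed
      next
        case n0: False
        have u1: "u!i = 1" using ui n0 n2 by simp
        have i0: "i \<noteq> 0" using False u1 by (cases i) auto
        have c: "cv u i = 2" using u1 i0 unfolding cv_def by simp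
        have T: "u[i:=2] \<in> Tr n" unfolding upd_Tr[OF uT i] using i0 u1 by auto
        show ?thesis using up[OF uT i T] u1 T c by simp
      qed
    qed
    then show ?thesis using e by simp
  qed
qed


lemma nb_surj:
  assumes uT: "u \<in> Tr n" and vT: "v \<in> Tr n" and cv: "tw_covers n u v \<or> tw_covers n v u"
  shows "\<exists>i<n. v = nb u n i"
proof -
  have u: "length u = n" "\<forall>i<n. u!i \<le> 2" "0<n \<longrightarrow> u!0 \<noteq> 2"
    "\<forall>i j. i<j \<and> j<n \<and> u!i=0 \<longrightarrow> u!j \<noteq> 1" using uT unfolding Tr_iff by auto
  obtain k where k: "k<n" "v = u[k:=v!k]"
  proof -
    show ?thesis
    proof (cases "tw_covers n u v")
      case True
      then show ?thesis using single[OF uT vT] that unfolding tw_covers_def by blast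
    next
      case False
      then have "tw_covers n v u" using cv by blast
      then obtain k where "k<n" and eq: "u = v[k:=u!k]" using single[OF vT uT] unfolding tw_covers_def by blast
      have "u[k:=v!k] = (v[k:=u!k])[k:=v!k]" using eq by (rule arg_cong[where f="\<lambda>x. x[k:=v!k]"])
      then have "v = u[k:=v!k]" by simp
      then show ?thesis using that \<open>k<n\<close> by blast
    qed
  qed
  define c where "c = v!k"
  have vc: "v = u[k:=c]" using k(2) unfolding c_def .
  have H: "(u!k < c \<and> \<not>(u!k=0 \<and> c=2 \<and> u[k:=1]\<in>Tr n)) \<or> (c < u!k \<and> \<not>(c=0 \<and> u!k=2 \<and> u[k:=1]\<in>Tr n))"
    using cv up'[OF uT k(1), of c] down'[OF uT k(1), of c] unfolding vc by blast
  have T: "u[k:=c] \<in> Tr n" using vT vc by simp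
  note TT = T[unfolded upd_Tr[OF uT k(1)]]
  have T1iff: "u[k:=1] \<in> Tr n \<longleftrightarrow> \<not> Zb u k" unfolding upd_Tr[OF uT k(1)] Zb_def by auto
  have uk: "u!k \<le> 2" using u k by auto
  show ?thesis
  proof (cases "u!k = 1 \<and> c = 0")
    case True
    have n0: "0 < n" using k by simp
    have u01: "u!0 = 1"
    proof (cases "k = 0")
      case True then show ?thesis using \<open>u!k = 1 \<and> c = 0\<close> by simp
    next
      case False
      have "0 < k \<and> k < n" using False k(1) by simp
      then have "u!0 = 0 \<longrightarrow> u!k \<noteq> 1" using u(4) by blast
      then have "u!0 \<noteq> 0" using True by blast
      moreover have "u!0 \<noteq> 2" using u(3) n0 by blast
      moreover have "u!0 \<le> 2" using u(2) n0 by blast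
      ultimately show ?thesis by simp
    qed
    have L1: "Lst u n < n" and L2: "u!(Lst u n) = 1" using Lst_props(1,2)[OF n0 u01] by auto
    have "k \<le> Lst u n" using Lst_props(3)[OF n0 u01 k(1)] True by simp
    moreover have "\<not> Lst u n > k"
    proof
      assume "Lst u n > k"
      then have "u!(Lst u n) \<noteq> 1" using TT True L1 by blast
      then show False using L2 by simp
    qed
    ultimately have Lk: "Lst u n = k" by simp
    have "nb u n 0 = u[k:=0]" unfolding nb_def pos_def cv_def using u01 Lk by simp
    then show ?thesis using vc True n0 by auto
  next
    case False
    have p: "pos u n k = k"
    proof (rule ccontr)
      assume "pos u n k \<noteq> k"
      then have "k = 0" "u!0 = 1" unfolding pos_def by (auto split: if_splits)
      then show False using H TT False by auto
    qed
    have c: "cv u k = c"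
    proof (cases "u!k = 2")
      case True
      then show ?thesis using H TT T1iff unfolding cv_def Zb_def by auto
    next
      case n2: False
      show ?thesis
      proof (cases "u!k = 0")
        case True
        then show ?thesis using H TT T1iff uk unfolding cv_def Zb_def by auto
      next
        case False
        then have "u!k = 1" using n2 uk by simp
        then have "c = 2" "k \<noteq> 0" using H TT \<open>\<not> (u!k = 1 \<and> c = 0)\<close> by auto
        then show ?thesis using \<open>u!k = 1\<close> unfolding cv_def by simp
      qed
    qed
    have "nb u n k = v" unfolding nb_def p c vc ..
    then show ?thesis using k(1) by metis
  qed
qed


lemma upd_eq:
  assumes "p < length u" "q < length u" "c \<noteq> u!p" "d \<noteq> u!q" "u[p:=c] = u[q:=d]"
  shows "p = q \<and> c = d"
proof -
  have "p = q"
  proof (rule ccontr)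
    assume "p \<noteq> q"
    have "u[p:=c]!p = u[q:=d]!p" using assms(5) by simp
    then show False using assms(1,3) \<open>p \<noteq> q\<close> by simp
  qed
  moreover have "u[p:=c]!p = u[q:=d]!q" using assms(5) \<open>p = q\<close> by simp
  ultimately show ?thesis using assms(1,2) by simp
qed

lemma nb_diff:
  assumes uT: "u \<in> Tr n" and i: "i < n"
  shows "pos u n i < n \<and> cv u i \<noteq> u!(pos u n i)"
proof (cases "i=0 \<and> u!0=1")
  case True
  have n0: "0<n" using i by simp
  have L1: "Lst u n < n" and L2: "u!(Lst u n) = 1" using Lst_props(1,2)[OF n0] True by auto
  show ?thesis using True L1 L2 unfolding pos_def cv_def by simp
next
  case False
  have "u!i \<le> 2" using uT i unfolding Tr_iff by auto
  then show ?thesis using False i unfolding pos_def cv_def by auto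
qed

lemma nb_inj:
  assumes uT: "u \<in> Tr n"
  shows "inj_on (nb u n) {..<n}"
proof (rule inj_onI)
  fix i j assume i: "i \<in> {..<n}" and j: "j \<in> {..<n}" and e: "nb u n i = nb u n j"
  have l: "length u = n" using uT unfolding Tr_iff by auto
  have di: "pos u n i < n" "cv u i \<noteq> u!(pos u n i)" using nb_diff[OF uT] i by auto
  have dj: "pos u n j < n" "cv u j \<noteq> u!(pos u n j)" using nb_diff[OF uT] j by auto
  have pe: "pos u n i = pos u n j" and ce: "cv u i = cv u j"
    using upd_eq[of "pos u n i" u "pos u n j" "cv u i" "cv u j"] di dj l e unfolding nb_def by auto
  have key: "a = b" if a: "a < n" "b < n" "pos u n a = pos u n b" "cv u a = cv u b" "a = 0" "u!0 = 1" for a b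
  proof (rule ccontr)
    assume "a \<noteq> b"
    then have b0: "b \<noteq> 0" using a by simp
    have n0: "0<n" using a by simp
    have pb: "pos u n b = b" using b0 unfolding pos_def by simp
    have pa: "pos u n a = Lst u n" using a unfolding pos_def by simp
    have "u!b = 1" using Lst_props(2)[OF n0 a(6)] pa pb a(3) by simp
    then have "cv u b = 2" using b0 unfolding cv_def by simp
    moreover have "cv u a = 0" using a unfolding cv_def by simp
    ultimately show False using a(4) by simp
  qed
  show "i = j"
  proof (cases "i=0 \<and> u!0=1")
    case True
    then show ?thesis using key[of i j] i j pe ce by auto
  next
    case F1: False
    show ?thesis
    proof (cases "j=0 \<and> u!0=1")
      case True
      then show ?thesis using key[of j i] i j pe ce by auto
    next
      case False
      then show ?thesis using F1 pe unfolding pos_def by auto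
    qed
  qed
qed

theorem lemma3p4:
  fixes n :: nat and u :: "nat list"
  assumes "n \<ge> 1" and "u \<in> Tr n"
  shows "tw_in n u + tw_out n u = n"
proof -
  note uT = assms(2)
  define A where "A = {v \<in> Tr n. tw_covers n v u}"
  define B where "B = {v \<in> Tr n. tw_covers n u v}"
  have AB: "A \<union> B = nb u n ` {..<n}"
  proof
    show "A \<union> B \<subseteq> nb u n ` {..<n}"
    proof
      fix v assume "v \<in> A \<union> B"
      then have "v \<in> Tr n" "tw_covers n u v \<or> tw_covers n v u" unfolding A_def B_def by auto
      then obtain i where "i<n" "v = nb u n i" using nb_surj[OF uT] by blast
      then show "v \<in> nb u n ` {..<n}" by blast
    qed
  next
    show "nb u n ` {..<n} \<subseteq> A \<union> B"
    proof
      fix v assume "v \<in> nb u n ` {..<n}"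
      then obtain i where "i<n" "v = nb u n i" by blast
      then show "v \<in> A \<union> B" using nb_cov[OF uT, of i] unfolding A_def B_def by auto
    qed
  qed
  have fin: "finite (A \<union> B)" unfolding AB by simp
  have antisym: "a = b" if "tw_le a b" "tw_le b a" for a b
    using that unfolding tw_le_def by (metis le_antisym nth_equalityI)
  have disj: "A \<inter> B = {}"
    unfolding A_def B_def tw_covers_def using antisym by blast
  have "tw_in n u + tw_out n u = card A + card B" unfolding tw_in_def tw_out_def A_def B_def ..
  also have "\<dots> = card (A \<union> B)" using card_Un_disjoint[of A B] fin disj by simp
  also have "\<dots> = n" unfolding AB using card_image[OF nb_inj[OF uT]] by simp
  finally show ?thesis .
qed

end
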